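(* Let $G$ be a cubic graph and let $Z$ be a set of $3$ vertices disjoint from $V(G)$. (i) If $G$ is $3$-edge colourable, then $\overline{K_Z}\vee G$ has a $K_3$-decomposition. (ii) If $G$ is not $3$-edge colourable, then the leave of any $K_3$-packing of $\overline{K_Z}\vee G$ contains an edge incident with a vertex in $Z$.
   Context: $\overline{K_Z}$ is the graph with vertex set $Z$ and no edges. For vertex-disjoint graphs $G,H$, $G\vee H$ has vertex set $V(G)\cup V(H)$ and edge set $E(G)\cup E(H)\cup\{xy:x\in V(G),y\in V(H)\}$. A $K_3$-decomposition of a graph is a set of triangles such that each edge lies in exactly one; a $K_3$-packing of $G$ is a $K_3$-decomposition of some subgraph $H$ of $G$, and its leave is the graph $G-H$ (vertex set $V(G)$, edge set $E(G)\setminus E(H)$). Edge colourings are proper. *)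

theory Defs
  imports Main
begin

type_synonym 'a graph = "'a set \<times> 'a set set"

definition verts :: "'a graph \<Rightarrow> 'a set" where "verts G = fst G"
definition edges :: "'a graph \<Rightarrow> 'a set set" where "edges G = snd G"

definition simple_graph :: "'a graph \<Rightarrow> bool" where
  "simple_graph G \<longleftrightarrow> finite (verts G) \<and> (\<forall>e\<in>edges G. e \<subseteq> verts G \<and> card e = 2)"

definition degree :: "'a graph \<Rightarrow> 'a \<Rightarrow> nat" where
  "degree G v = card {e \<in> edges G. v \<in> e}"

definition cubic :: "'a graph \<Rightarrow> bool" where
  "cubic G \<longleftrightarrow> simple_graph G \<and> (\<forall>v\<in>verts G. degree G v = 3)"

definition proper_edge_colouring :: "'a graph \<Rightarrow> nat \<Rightarrow> ('a set \<Rightarrow> nat) \<Rightarrow> bool" where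
  "proper_edge_colouring G k c \<longleftrightarrow>
     (\<forall>e\<in>edges G. c e < k) \<and>
     (\<forall>e\<in>edges G. \<forall>f\<in>edges G. e \<noteq> f \<and> e \<inter> f \<noteq> {} \<longrightarrow> c e \<noteq> c f)"

definition edge_colourable :: "'a graph \<Rightarrow> nat \<Rightarrow> bool" where
  "edge_colourable G k \<longleftrightarrow> (\<exists>c. proper_edge_colouring G k c)"

definition empty_graph :: "'a set \<Rightarrow> 'a graph" where
  "empty_graph Z = (Z, {})"

definition join :: "'a graph \<Rightarrow> 'a graph \<Rightarrow> 'a graph" where
  "join G H = (verts G \<union> verts H,
               edges G \<union> edges H \<union> {{x, y} | x y. x \<in> verts G \<and> y \<in> verts H})"

text \<open>A triangle is represented by its 3-element vertex set; its edges are its 2-subsets.\<close>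
definition tri_edges :: "'a set \<Rightarrow> 'a set set" where
  "tri_edges T = {e. e \<subseteq> T \<and> card e = 2}"

definition is_triangle_in :: "'a graph \<Rightarrow> 'a set \<Rightarrow> bool" where
  "is_triangle_in G T \<longleftrightarrow> card T = 3 \<and> T \<subseteq> verts G \<and> tri_edges T \<subseteq> edges G"

definition K3_decomposition :: "'a graph \<Rightarrow> 'a set set \<Rightarrow> bool" where
  "K3_decomposition G \<T> \<longleftrightarrow>
     (\<forall>T\<in>\<T>. is_triangle_in G T) \<and> (\<forall>e\<in>edges G. \<exists>!T. T \<in> \<T> \<and> e \<in> tri_edges T)"

definition subgraph :: "'a graph \<Rightarrow> 'a graph \<Rightarrow> bool" where
  "subgraph H G \<longleftrightarrow> verts H \<subseteq> verts G \<and> edges H \<subseteq> edges G \<and> simple_graph H"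

definition K3_packing :: "'a graph \<Rightarrow> 'a graph \<Rightarrow> 'a set set \<Rightarrow> bool" where
  "K3_packing G H \<T> \<longleftrightarrow> subgraph H G \<and> K3_decomposition H \<T>"

definition leave :: "'a graph \<Rightarrow> 'a graph \<Rightarrow> 'a graph" where
  "leave G H = (verts G, edges G - edges H)"

end

theory Submission
  imports Defs
begin

lemma tri3: assumes "x \<noteq> y" "x \<noteq> w" "y \<noteq> w"
  shows "tri_edges {x,y,w} = {{x,y},{x,w},{y,w}}"
proof
  show "tri_edges {x,y,w} \<subseteq> {{x,y},{x,w},{y,w}}"
  proof
    fix e assume "e \<in> tri_edges {x,y,w}"
    then have "e \<subseteq> {x,y,w}" "card e = 2" by (auto simp: tri_edges_def)
    then obtain p q where "e = {p,q}" "p \<noteq> q" by (auto simp: card_2_iff)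
    then show "e \<in> {{x,y},{x,w},{y,w}}" using \<open>e \<subseteq> {x,y,w}\<close> by auto
  qed
  show "{{x,y},{x,w},{y,w}} \<subseteq> tri_edges {x,y,w}" using assms by (auto simp: tri_edges_def)
qed

lemma in_tri: assumes "card T = 3" "x \<in> T" "y \<in> T" "x \<noteq> y"
  shows "\<exists>w. T = {x,y,w} \<and> w \<noteq> x \<and> w \<noteq> y"
proof -
  have f: "finite T" using assms(1) by (metis card.infinite zero_neq_numeral)
  have "card (T - {x,y}) = 1" using assms f by (simp add: card_Diff_subset)
  then obtain w where w: "T - {x,y} = {w}" by (auto simp: card_1_singleton_iff)
  then have "T = {x,y,w}" using assms by blast
  then show ?thesis using w by blast
qed

lemma card3: "x \<noteq> y \<Longrightarrow> x \<noteq> w \<Longrightarrow> y \<noteq> w \<Longrightarrow> card {x,y,w} = 3" by auto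

locale lsetup =
  fixes G :: "'a graph" and Z :: "'a set"
  assumes cub: "cubic G" and disj: "Z \<inter> verts G = {}" and card3Z: "card Z = 3"
begin

abbreviation "J \<equiv> join (empty_graph Z) G"

lemma vJ: "verts J = Z \<union> verts G" by (simp add: join_def verts_def empty_graph_def)
lemma eJ: "edges J = edges G \<union> {{x,y}|x y. x \<in> Z \<and> y \<in> verts G}"
  by (simp add: join_def verts_def edges_def empty_graph_def)

lemma Eg: "e \<in> edges G \<Longrightarrow> e \<subseteq> verts G \<and> card e = 2"
  using cub by (auto simp: cubic_def simple_graph_def)

lemma Eg2: "e \<in> edges G \<Longrightarrow> \<exists>u v. e = {u,v} \<and> u \<noteq> v \<and> u \<in> verts G \<and> v \<in> verts G"
  using Eg[of e] by (auto simp: card_2_iff)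

lemma deg: "v \<in> verts G \<Longrightarrow> card {e \<in> edges G. v \<in> e} = 3"
  using cub by (auto simp: cubic_def degree_def)

lemma noZZ: "x \<in> Z \<Longrightarrow> y \<in> Z \<Longrightarrow> {x,y} \<in> edges J \<Longrightarrow> False"
  using disj Eg unfolding eJ by (auto simp: doubleton_eq_iff)

lemma VV: "x \<in> verts G \<Longrightarrow> y \<in> verts G \<Longrightarrow> {x,y} \<in> edges J \<Longrightarrow> {x,y} \<in> edges G"
  using disj unfolding eJ by (auto simp: doubleton_eq_iff)

lemma cross: "z \<in> Z \<Longrightarrow> v \<in> verts G \<Longrightarrow> {z,v} \<in> edges J"
  unfolding eJ by blast

end


locale lpack = lsetup +
  fixes H :: "'a graph" and TT :: "'a set set"
  assumes pk: "K3_packing J H TT"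
    and allH: "\<And>e. e \<in> edges J \<Longrightarrow> e \<inter> Z \<noteq> {} \<Longrightarrow> e \<in> edges H"
begin

lemma HJ: "verts H \<subseteq> verts J" "edges H \<subseteq> edges J"
  using pk by (auto simp: K3_packing_def subgraph_def)

lemma triT: "T \<in> TT \<Longrightarrow> is_triangle_in H T"
  using pk by (auto simp: K3_packing_def K3_decomposition_def)

lemma uniq: "e \<in> edges H \<Longrightarrow> T1 \<in> TT \<Longrightarrow> T2 \<in> TT \<Longrightarrow> e \<in> tri_edges T1 \<Longrightarrow> e \<in> tri_edges T2 \<Longrightarrow> T1 = T2"
  using pk unfolding K3_packing_def K3_decomposition_def by blast

lemma exT: "e \<in> edges H \<Longrightarrow> \<exists>T\<in>TT. e \<in> tri_edges T"
  using pk unfolding K3_packing_def K3_decomposition_def by blast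

lemma inH: "T \<in> TT \<Longrightarrow> e \<in> tri_edges T \<Longrightarrow> e \<in> edges H"
  using triT by (auto simp: is_triangle_in_def)

lemma pair_tri: "x \<noteq> y \<Longrightarrow> x \<in> T \<Longrightarrow> y \<in> T \<Longrightarrow> {x,y} \<in> tri_edges T"
  by (auto simp: tri_edges_def)

lemma zedge: assumes z: "z \<in> Z" and v: "v \<in> verts G"
  shows "\<exists>w. w \<in> verts G \<and> w \<noteq> v \<and> {z,v,w} \<in> TT \<and> {v,w} \<in> edges G"
proof -
  have zv: "z \<noteq> v" using z v disj by blast
  have "{z,v} \<in> edges H" using allH[OF cross[OF z v]] z by auto
  then obtain T where T: "T \<in> TT" "{z,v} \<in> tri_edges T" using exT by blast
  have tT: "card T = 3" "T \<subseteq> verts H" "tri_edges T \<subseteq> edges H"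
    using triT[OF T(1)] by (auto simp: is_triangle_in_def)
  have "z \<in> T" "v \<in> T" using T(2) by (auto simp: tri_edges_def)
  then obtain w where w: "T = {z,v,w}" "w \<noteq> z" "w \<noteq> v" using in_tri[OF tT(1) _ _ zv] by blast
  have zw: "{z,w} \<in> edges J" using tT(3) HJ(2) pair_tri[of z w T] w by auto
  have vw: "{v,w} \<in> edges J" using tT(3) HJ(2) pair_tri[of v w T] w by auto
  have "w \<in> verts J" using tT(2) HJ(1) w by auto
  moreover have "w \<notin> Z" using noZZ[OF z _ zw] by blast
  ultimately have wV: "w \<in> verts G" using vJ by auto
  show ?thesis using VV[OF v wV vw] wV w T(1) by auto
qed

lemma all_tri: assumes e: "e \<in> edges G" shows "\<exists>z\<in>Z. insert z e \<in> TT"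
proof -
  obtain u v where uv: "e = {u,v}" "u \<noteq> v" "u \<in> verts G" "v \<in> verts G" using Eg2[OF e] by blast
  have dis: "{v,w1} \<noteq> {v,w2}" if "z1 \<in> Z" "z2 \<in> Z" "z1 \<noteq> z2" "w1 \<in> verts G" "w1 \<noteq> v"
     "{z1,v,w1} \<in> TT" "w2 \<in> verts G" "w2 \<noteq> v" "{z2,v,w2} \<in> TT" for z1 z2 w1 w2
  proof
    assume eq: "{v,w1} = {v,w2}"
    then have "w1 = w2" using that by (auto simp: doubleton_eq_iff)
    have "{v,w1} \<in> tri_edges {z1,v,w1}" using that by (intro pair_tri) auto
    then have inh: "{v,w1} \<in> edges H" using inH that by blast
    have "{v,w1} \<in> tri_edges {z2,v,w2}" using that \<open>w1 = w2\<close> by (intro pair_tri) auto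
    then have "{z1,v,w1} = {z2,v,w2}" using uniq[OF inh] that \<open>{v,w1} \<in> tri_edges {z1,v,w1}\<close> by blast
    then have "z1 \<in> {z2,v,w2}" by blast
    then show False using that disj uv by auto
  qed
  obtain a b c where abc: "Z = {a,b,c}" "a \<noteq> b" "b \<noteq> c" "a \<noteq> c" using card3Z by (auto simp: card_3_iff)
  obtain wa where wa: "wa \<in> verts G" "wa \<noteq> v" "{a,v,wa} \<in> TT" "{v,wa} \<in> edges G" using zedge[of a v] abc uv by auto
  obtain wb where wb: "wb \<in> verts G" "wb \<noteq> v" "{b,v,wb} \<in> TT" "{v,wb} \<in> edges G" using zedge[of b v] abc uv by auto
  obtain wc where wc: "wc \<in> verts G" "wc \<noteq> v" "{c,v,wc} \<in> TT" "{v,wc} \<in> edges G" using zedge[of c v] abc uv by auto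
  have d1: "{v,wa} \<noteq> {v,wb}" using dis[of a b wa wb] abc wa wb by auto
  have d2: "{v,wb} \<noteq> {v,wc}" using dis[of b c wb wc] abc wb wc by auto
  have d3: "{v,wa} \<noteq> {v,wc}" using dis[of a c wa wc] abc wa wc by auto
  let ?S = "{f \<in> edges G. v \<in> f}"
  have cS: "card ?S = 3" using deg uv by auto
  then have fS: "finite ?S" by (metis card.infinite zero_neq_numeral)
  have sub: "{{v,wa},{v,wb},{v,wc}} \<subseteq> ?S" using wa wb wc by auto
  have "card {{v,wa},{v,wb},{v,wc}} = 3" using d1 d2 d3 by (intro card3)
  then have "{{v,wa},{v,wb},{v,wc}} = ?S" using card_subset_eq[OF fS sub] cS by simp
  moreover have "e \<in> ?S" using e uv by auto
  ultimately have "e = {v,wa} \<or> e = {v,wb} \<or> e = {v,wc}" by blast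
  then show ?thesis using wa wb wc abc by (auto simp: insert_commute)
qed


lemma colourable: "edge_colourable G 3"
proof -
  obtain a b c where abc: "Z = {a,b,c}" "a \<noteq> b" "b \<noteq> c" "a \<noteq> c" using card3Z by (auto simp: card_3_iff)
  define col where "col e = (if insert a e \<in> TT then 0 else if insert b e \<in> TT then 1 else (2::nat))" for e
  have same: "\<exists>z\<in>Z. insert z e \<in> TT \<and> insert z f \<in> TT" if "e \<in> edges G" "f \<in> edges G" "col e = col f" for e f
    using all_tri[OF that(1)] all_tri[OF that(2)] that(3) abc unfolding col_def
    by (auto split: if_splits)
  have "proper_edge_colouring G 3 col"
    unfolding proper_edge_colouring_def
  proof (intro conjI ballI impI)
    fix e assume "e \<in> edges G" then show "col e < 3" by (simp add: col_def)
  next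
    fix e f assume ef: "e \<in> edges G" "f \<in> edges G" "e \<noteq> f \<and> e \<inter> f \<noteq> {}"
    show "col e \<noteq> col f"
    proof
      assume "col e = col f"
      then obtain z where z: "z \<in> Z" "insert z e \<in> TT" "insert z f \<in> TT" using same ef by blast
      obtain v where v: "v \<in> e" "v \<in> f" using ef by blast
      have vV: "v \<in> verts G" using v ef Eg by blast
      have zn: "z \<notin> e" "z \<notin> f" using ef Eg disj z by blast+
      have zv: "z \<noteq> v" using vV z disj by blast
      have "{z,v} \<in> tri_edges (insert z e)" using v zv by (intro pair_tri) auto
      moreover have "{z,v} \<in> tri_edges (insert z f)" using v zv by (intro pair_tri) auto
      ultimately have "insert z e = insert z f" using uniq z inH by blast
      then have "e = f" using zn by (metis Diff_insert_absorb)
      then show False using ef by blast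
    qed
  qed
  then show ?thesis by (auto simp: edge_colourable_def)
qed

end

context lsetup begin

lemma decomp: assumes "edge_colourable G 3" shows "\<exists>TT. K3_decomposition J TT"
proof -
  obtain col where col: "proper_edge_colouring G 3 col" using assms by (auto simp: edge_colourable_def)
  have colr: "col e < 3" if "e \<in> edges G" for e using col that by (auto simp: proper_edge_colouring_def)
  have colp: "col e \<noteq> col f" if "e \<in> edges G" "f \<in> edges G" "e \<noteq> f" "v \<in> e" "v \<in> f" for e f v
    using col that by (auto simp: proper_edge_colouring_def)
  obtain a b c where abc: "Z = {a,b,c}" "a \<noteq> b" "b \<noteq> c" "a \<noteq> c" using card3Z by (auto simp: card_3_iff)
  define zc where "zc i = (if i = 0 then a else if i = (1::nat) then b else c)" for i
  have zcZ: "zc i \<in> Z" for i using abc by (auto simp: zc_def)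
  have zcinj: "i = j" if "zc i = zc j" "i < 3" "j < 3" for i j
    using that abc by (auto simp: zc_def split: if_splits)
  have zcsurj: "\<exists>i<3. zc i = x" if "x \<in> Z" for x
  proof -
    have z0: "zc 0 = a" "zc 1 = b" "zc 2 = c" by (simp_all add: zc_def)
    have "x = a \<or> x = b \<or> x = c" using that abc by blast
    moreover have "0<(3::nat)" "1<(3::nat)" "2<(3::nat)" by simp_all
    ultimately show ?thesis using z0 by blast
  qed
  define TT where "TT = (\<lambda>e. insert (zc (col e)) e) ` edges G"
  have Vz: "x \<notin> e" if "x \<in> Z" "e \<in> edges G" for x e using that disj Eg by blast
  have tri: "is_triangle_in J (insert (zc (col e)) e)" if e: "e \<in> edges G" for e
  proof -
    obtain u v where uv: "e = {u,v}" "u \<noteq> v" "u \<in> verts G" "v \<in> verts G" using Eg2[OF e] by blast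
    let ?z = "zc (col e)"
    have z1: "?z \<in> Z" by (rule zcZ)
    then have z: "?z \<in> Z" "?z \<noteq> u" "?z \<noteq> v" using disj uv by auto
    have "insert ?z e = {?z,u,v}" using uv by simp
    moreover have "card {?z,u,v} = 3" using z uv by (intro card3) auto
    moreover have "{?z,u,v} \<subseteq> verts J" using z uv vJ by auto
    moreover have "tri_edges {?z,u,v} \<subseteq> edges J"
    proof -
      have "{{?z,u},{?z,v},{u,v}} \<subseteq> edges J" using cross[OF z(1) uv(3)] cross[OF z(1) uv(4)] e uv(1) eJ by blast
      then show ?thesis using tri3[of ?z u v] z uv by simp
    qed
    ultimately show ?thesis by (simp add: is_triangle_in_def)
  qed
  have "K3_decomposition J TT"
    unfolding K3_decomposition_def
  proof (intro conjI ballI)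
    fix T assume "T \<in> TT" then show "is_triangle_in J T" using tri by (auto simp: TT_def)
  next
    fix e assume "e \<in> edges J"
    then consider (G) "e \<in> edges G" | (X) x y where "e = {x,y}" "x \<in> Z" "y \<in> verts G" using eJ by auto
    then show "\<exists>!T. T \<in> TT \<and> e \<in> tri_edges T"
    proof cases
      case G
      have ex: "insert (zc (col e)) e \<in> TT \<and> e \<in> tri_edges (insert (zc (col e)) e)"
        using G Eg[OF G] by (auto simp: TT_def tri_edges_def)
      show ?thesis
      proof (rule ex1I[of "\<lambda>T. T \<in> TT \<and> e \<in> tri_edges T", OF ex])
        fix T assume T: "T \<in> TT \<and> e \<in> tri_edges T"
        then obtain f where f: "f \<in> edges G" "T = insert (zc (col f)) f" by (auto simp: TT_def)
        have "e \<subseteq> insert (zc (col f)) f" "card e = 2" using T f by (auto simp: tri_edges_def)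
        moreover have "zc (col f) \<notin> e" using Vz[OF zcZ G] .
        ultimately have "e \<subseteq> f" by blast
        moreover have "card f = 2" "finite f" using Eg[OF f(1)] by (auto simp: card_2_iff)
        ultimately have "e = f" using \<open>card e = 2\<close> by (metis card_subset_eq)
        then show "T = insert (zc (col e)) e" using f by simp
      qed
    next
      case X
      obtain i where i: "i < 3" "zc i = x" using zcsurj X by blast
      let ?S = "{f \<in> edges G. y \<in> f}"
      have cS: "card ?S = 3" using deg X by auto
      then have fS: "finite ?S" by (metis card.infinite zero_neq_numeral)
      have inj: "inj_on col ?S" using colp by (auto simp: inj_on_def)
      have "col ` ?S \<subseteq> {..<3}" using colr by auto
      moreover have "card (col ` ?S) = card {..<3::nat}" using card_image[OF inj] cS by simp
      ultimately have "col ` ?S = {..<3}" by (metis card_subset_eq finite_lessThan)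
      then obtain f where f: "f \<in> edges G" "y \<in> f" "col f = i" using i by (metis (no_types, lifting) image_iff lessThan_iff mem_Collect_eq)
      have xy: "x \<noteq> y" using X disj by blast
      have ex: "insert (zc (col f)) f \<in> TT \<and> e \<in> tri_edges (insert (zc (col f)) f)"
        using f X i xy by (auto simp: TT_def tri_edges_def)
      show ?thesis
      proof (rule ex1I[of "\<lambda>T. T \<in> TT \<and> e \<in> tri_edges T", OF ex])
        fix T assume T: "T \<in> TT \<and> e \<in> tri_edges T"
        then obtain g where g: "g \<in> edges G" "T = insert (zc (col g)) g" by (auto simp: TT_def)
        have "{x,y} \<subseteq> insert (zc (col g)) g" using T g X by (auto simp: tri_edges_def)
        moreover have "x \<notin> g" using Vz X g by blast
        ultimately have "x = zc (col g)" "y \<in> g" using xy by auto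
        then have "col g = i" using zcinj i colr[OF g(1)] by metis
        then have "g = f" using colp[of g f y] f g \<open>y \<in> g\<close> by auto
        then show "T = insert (zc (col f)) f" using g by simp
      qed
    qed
  qed
  then show ?thesis by blast
qed

end

theorem lemma5:
  fixes G :: "'a graph" and Z :: "'a set"
  assumes "cubic G" and "card Z = 3" and "Z \<inter> verts G = {}"
  shows "(edge_colourable G 3 \<longrightarrow> (\<exists>\<T>. K3_decomposition (join (empty_graph Z) G) \<T>))
       \<and> (\<not> edge_colourable G 3 \<longrightarrow>
            (\<forall>H \<T>. K3_packing (join (empty_graph Z) G) H \<T> \<longrightarrow>
               (\<exists>e\<in>edges (leave (join (empty_graph Z) G) H). e \<inter> Z \<noteq> {})))"
proof -
  interpret lsetup G Z using assms by unfold_locales auto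
  show ?thesis
  proof (intro conjI impI allI)
    assume "edge_colourable G 3" then show "\<exists>\<T>. K3_decomposition J \<T>" by (rule decomp)
  next
    fix H TT
    assume nc: "\<not> edge_colourable G 3" and pk: "K3_packing J H TT"
    show "\<exists>e\<in>edges (leave J H). e \<inter> Z \<noteq> {}"
    proof (rule ccontr)
      assume "\<not> ?thesis"
      then have "\<And>e. e \<in> edges J \<Longrightarrow> e \<inter> Z \<noteq> {} \<Longrightarrow> e \<in> edges H"
        by (auto simp: leave_def edges_def)
      then interpret lpack G Z H TT using pk by unfold_locales auto
      show False using colourable nc by blast
    qed
  qed
qed

end
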